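(* Let $U,V$ be nonempty sets, $f:U\times V\to\mathbb R$ bounded, $f^-=\sup_{u\in U}\inf_{v\in V}f(u,v)$, $f^+=\inf_{v\in V}\sup_{u\in U}f(u,v)$, and for $p\in[0,1]$ let $f^p=pf^-+(1-p)f^+$. Let $\alpha$ range over all maps $V\to U$ and $\beta$ over all maps $U\to V$. Then $$f^p=\sup_{(u,\alpha)}\inf_{(v,\beta)}\big[p\,f(u,\beta(u))+(1-p)f(\alpha(v),v)\big]=\inf_{(v,\beta)}\sup_{(u,\alpha)}\big[p\,f(u,\beta(u))+(1-p)f(\alpha(v),v)\big],$$ where the sup is over $(u,\alpha)\in U\times V^{\,\text{maps}}$ ($u\in U$, $\alpha:V\to U$) and the inf over $(v,\beta)$ with $v\in V$, $\beta:U\to V$. *)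

theory Defs
  imports Complex_Main
begin

definition lower_value :: "'u set \<Rightarrow> 'v set \<Rightarrow> ('u \<Rightarrow> 'v \<Rightarrow> real) \<Rightarrow> real" where
  "lower_value U V f = (SUP u\<in>U. INF v\<in>V. f u v)"

definition upper_value :: "'u set \<Rightarrow> 'v set \<Rightarrow> ('u \<Rightarrow> 'v \<Rightarrow> real) \<Rightarrow> real" where
  "upper_value U V f = (INF v\<in>V. SUP u\<in>U. f u v)"

definition p_value :: "real \<Rightarrow> 'u set \<Rightarrow> 'v set \<Rightarrow> ('u \<Rightarrow> 'v \<Rightarrow> real) \<Rightarrow> real" where
  "p_value p U V f = p * lower_value U V f + (1 - p) * upper_value U V f"

end

theory Submission
  imports Defs
begin

theorem mainTheorem10:
  fixes U :: "'u set" and V :: "'v set" and f :: "'u \<Rightarrow> 'v \<Rightarrow> real" and p :: real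
  assumes "U \<noteq> {}" and "V \<noteq> {}"
    and "\<exists>B. \<forall>u\<in>U. \<forall>v\<in>V. \<bar>f u v\<bar> \<le> B"
    and "0 \<le> p" and "p \<le> 1"
  shows "p_value p U V f =
           (SUP ua\<in>{(u, \<alpha>). u \<in> U \<and> \<alpha> ` V \<subseteq> U}.
              INF vb\<in>{(v, \<beta>). v \<in> V \<and> \<beta> ` U \<subseteq> V}.
                p * f (fst ua) (snd vb (fst ua)) + (1 - p) * f (snd ua (fst vb)) (fst vb))
       \<and> p_value p U V f =
           (INF vb\<in>{(v, \<beta>). v \<in> V \<and> \<beta> ` U \<subseteq> V}.
              SUP ua\<in>{(u, \<alpha>). u \<in> U \<and> \<alpha> ` V \<subseteq> U}.
                p * f (fst ua) (snd vb (fst ua)) + (1 - p) * f (snd ua (fst vb)) (fst vb))"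
proof -
  obtain B0 where B0: "\<And>u v. u \<in> U \<Longrightarrow> v \<in> V \<Longrightarrow> \<bar>f u v\<bar> \<le> B0" using assms(3) by blast
  define A where "A = {(u, \<alpha>). u \<in> U \<and> \<alpha> ` V \<subseteq> U}"
  define BB where "BB = {(v, \<beta>). v \<in> V \<and> \<beta> ` U \<subseteq> V}"
  define g where "g = (\<lambda>ua vb. p * f (fst ua) (snd vb (fst ua)) + (1 - p) * f (snd ua (fst vb)) (fst vb))"
  define L where "L = lower_value U V f"
  define Up where "Up = upper_value U V f"
  define T where "T = p * L + (1 - p) * Up"
  have pv: "p_value p U V f = T" unfolding T_def L_def Up_def p_value_def by simp
  have inA: "\<And>u \<alpha>. (u, \<alpha>) \<in> A \<longleftrightarrow> u \<in> U \<and> \<alpha> ` V \<subseteq> U" unfolding A_def by simp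
  have inB: "\<And>v \<beta>. (v, \<beta>) \<in> BB \<longleftrightarrow> v \<in> V \<and> \<beta> ` U \<subseteq> V" unfolding BB_def by simp
  obtain u0 where u0: "u0 \<in> U" using assms(1) by blast
  obtain v0 where v0: "v0 \<in> V" using assms(2) by blast
  have Ane: "A \<noteq> {}" using inA[of u0 "\<lambda>_. u0"] u0 by blast
  have Bne: "BB \<noteq> {}" using inB[of v0 "\<lambda>_. v0"] v0 by blast
  have fb1: "f u v \<le> B0" if "u \<in> U" "v \<in> V" for u v using B0[OF that] by linarith
  have fb2: "- B0 \<le> f u v" if "u \<in> U" "v \<in> V" for u v using B0[OF that] by linarith
  have gbnd: "\<bar>g a b\<bar> \<le> B0" if "a \<in> A" "b \<in> BB" for a b
  proof -
    obtain u \<alpha> where a: "a = (u, \<alpha>)" by (cases a)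
    obtain v \<beta> where b: "b = (v, \<beta>)" by (cases b)
    have h: "u \<in> U" "\<alpha> v \<in> U" "v \<in> V" "\<beta> u \<in> V" using that a b inA inB by auto
    have "\<bar>f u (\<beta> u)\<bar> \<le> B0" "\<bar>f (\<alpha> v) v\<bar> \<le> B0" using B0 h by auto
    hence "\<bar>p * f u (\<beta> u)\<bar> \<le> p * B0" "\<bar>(1-p) * f (\<alpha> v) v\<bar> \<le> (1-p) * B0"
      using assms(4,5) by (auto simp: abs_mult intro: mult_left_mono)
    hence "\<bar>p * f u (\<beta> u) + (1-p) * f (\<alpha> v) v\<bar> \<le> p * B0 + (1-p) * B0" by (smt (verit))
    hence "\<bar>p * f u (\<beta> u) + (1-p) * f (\<alpha> v) v\<bar> \<le> B0" by (simp add: algebra_simps)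
    thus ?thesis unfolding g_def a b by simp
  qed
  have bddA1: "bdd_above (f u ` V)" "bdd_below (f u ` V)" if "u \<in> U" for u
    using fb1 fb2 that by (auto intro!: bdd_aboveI2 bdd_belowI2)
  have bddB1: "bdd_above ((\<lambda>u. f u v) ` U)" "bdd_below ((\<lambda>u. f u v) ` U)" if "v \<in> V" for v
    using fb1 fb2 that by (auto intro!: bdd_aboveI2 bdd_belowI2)
  have infle: "(INF v\<in>V. f u v) \<le> B0" if "u \<in> U" for u
    using cINF_lower[OF bddA1(2)[OF that] v0] fb1[OF that v0] by linarith
  have supge: "- B0 \<le> (SUP u\<in>U. f u v)" if "v \<in> V" for v
    using cSUP_upper[OF u0 bddB1(1)[OF that]] fb2[OF u0 that] by linarith
  have bddL: "bdd_above ((\<lambda>u. INF v\<in>V. f u v) ` U)" using infle by (auto intro!: bdd_aboveI2)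
  have bddU: "bdd_below ((\<lambda>v. SUP u\<in>U. f u v) ` V)" using supge by (auto intro!: bdd_belowI2)
  have infL: "(INF v\<in>V. f u v) \<le> L" if "u \<in> U" for u
    unfolding L_def lower_value_def using cSUP_upper[OF that bddL] .
  have supU: "Up \<le> (SUP u\<in>U. f u v)" if "v \<in> V" for v
    unfolding Up_def upper_value_def using cINF_lower[OF bddU that] .
  have apL: "\<exists>u\<in>U. L - e < (INF v\<in>V. f u v)" if "e > 0" for e
  proof -
    have "L - e < L" using that by simp
    thus ?thesis unfolding L_def lower_value_def using less_cSUP_iff[OF assms(1) bddL] by blast
  qed
  have apU: "\<exists>v\<in>V. (SUP u\<in>U. f u v) < Up + e" if "e > 0" for e
  proof -
    have "Up < Up + e" using that by simp
    thus ?thesis unfolding Up_def upper_value_def using cINF_less_iff[OF assms(2) bddU] by blast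
  qed
  have apI: "\<exists>v\<in>V. f u v < (INF v\<in>V. f u v) + e" if "e > 0" "u \<in> U" for e u
  proof -
    have "(INF v\<in>V. f u v) < (INF v\<in>V. f u v) + e" using that by simp
    thus ?thesis using cINF_less_iff[OF assms(2) bddA1(2)[OF that(2)]] by blast
  qed
  have apS: "\<exists>u\<in>U. (SUP u\<in>U. f u v) - e < f u v" if "e > 0" "v \<in> V" for e v
  proof -
    have "(SUP u\<in>U. f u v) - e < (SUP u\<in>U. f u v)" using that by simp
    thus ?thesis using less_cSUP_iff[OF assms(1) bddB1(1)[OF that(2)]] by blast
  qed
  have comb: "p * x + (1-p) * y \<le> p * x' + (1-p) * y'" if "x \<le> x'" "y \<le> y'" for x y x' y'
  proof -
    have "p * x \<le> p * x'" using that assms(4) by (simp add: mult_left_mono)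
    moreover have "(1-p) * y \<le> (1-p) * y'" using that assms(5) by (simp add: mult_left_mono)
    ultimately show ?thesis by simp
  qed
  have Teps: "p * (L + e) + (1-p) * (Up + e) = T + e" "p * (L - e) + (1-p) * (Up - e) = T - e" for e
    unfolding T_def by (simp_all add: algebra_simps)
  have gb1: "g a b \<le> B0" "- B0 \<le> g a b" if "a \<in> A" "b \<in> BB" for a b
    using gbnd[OF that] by linarith+
  have bddgB: "bdd_below (g a ` BB)" "bdd_above (g a ` BB)" if "a \<in> A" for a
    using gb1 that by (meson bdd_belowI2 bdd_aboveI2)+
  have bddgA: "bdd_below ((\<lambda>a. g a b) ` A)" "bdd_above ((\<lambda>a. g a b) ` A)" if "b \<in> BB" for b
    using gb1 that by (meson bdd_belowI2 bdd_aboveI2)+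
  have I_le: "(INF b\<in>BB. g a b) \<le> T" if "a \<in> A" for a
  proof (rule field_le_epsilon)
    fix e :: real assume e: "0 < e"
    obtain u \<alpha> where a: "a = (u, \<alpha>)" by (cases a)
    have u: "u \<in> U" and al: "\<alpha> ` V \<subseteq> U" using that a inA by auto
    obtain v where v: "v \<in> V" "(SUP u\<in>U. f u v) < Up + e" using apU e by blast
    obtain v' where v': "v' \<in> V" "f u v' < (INF v\<in>V. f u v) + e" using apI[OF e u] by blast
    have bin: "(v, \<lambda>_. v') \<in> BB" using inB v v' by auto
    have "f (\<alpha> v) v \<le> (SUP u\<in>U. f u v)" using cSUP_upper[OF _ bddB1(1)[OF v(1)]] al v by auto
    hence h1: "f (\<alpha> v) v \<le> Up + e" using v by linarith
    have h2: "f u v' \<le> L + e" using v' infL[OF u] by linarith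
    have "(INF b\<in>BB. g a b) \<le> g a (v, \<lambda>_. v')" using cINF_lower[OF bddgB(1)[OF that] bin] .
    also have "\<dots> = p * f u v' + (1-p) * f (\<alpha> v) v" unfolding g_def a by simp
    also have "\<dots> \<le> p * (L + e) + (1-p) * (Up + e)" using comb h1 h2 by blast
    finally show "(INF b\<in>BB. g a b) \<le> T + e" using Teps by simp
  qed
  have bddI: "bdd_above ((\<lambda>a. INF b\<in>BB. g a b) ` A)" using I_le by (auto intro!: bdd_aboveI2)
  have S1: "(SUP a\<in>A. INF b\<in>BB. g a b) = T"
  proof (rule antisym)
    show "(SUP a\<in>A. INF b\<in>BB. g a b) \<le> T" using I_le Ane by (simp add: cSUP_least)
    show "T \<le> (SUP a\<in>A. INF b\<in>BB. g a b)"
    proof (rule field_le_epsilon)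
      fix e :: real assume e: "0 < e"
      have "T \<le> (SUP a\<in>A. INF b\<in>BB. g a b) + e"
      proof -
        obtain u where u: "u \<in> U" "L - e < (INF v\<in>V. f u v)" using apL e by blast
        define \<alpha> where "\<alpha> = (\<lambda>v. SOME u. u \<in> U \<and> (SUP u\<in>U. f u v) - e < f u v)"
        have al: "\<alpha> v \<in> U \<and> (SUP u\<in>U. f u v) - e < f (\<alpha> v) v" if "v \<in> V" for v
        proof -
          have "\<exists>u. u \<in> U \<and> (SUP u\<in>U. f u v) - e < f u v" using apS[OF e that] by blast
          thus ?thesis unfolding \<alpha>_def by (rule someI_ex)
        qed
        have ain: "(u, \<alpha>) \<in> A" using inA u al by auto
        have "T - e \<le> (INF b\<in>BB. g (u, \<alpha>) b)"
        proof (rule cINF_greatest[OF Bne])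
          fix b assume b: "b \<in> BB"
          obtain v \<beta> where bb: "b = (v, \<beta>)" by (cases b)
          have v: "v \<in> V" and be: "\<beta> ` U \<subseteq> V" using b bb inB by auto
          have "(INF v\<in>V. f u v) \<le> f u (\<beta> u)" using cINF_lower[OF bddA1(2)[OF u(1)]] be u by auto
          hence h1: "L - e \<le> f u (\<beta> u)" using u by linarith
          have h2: "Up - e \<le> f (\<alpha> v) v" using al[OF v] supU[OF v] by linarith
          have "T - e = p * (L - e) + (1-p) * (Up - e)" using Teps by simp
          also have "\<dots> \<le> p * f u (\<beta> u) + (1-p) * f (\<alpha> v) v" using comb h1 h2 by blast
          finally show "T - e \<le> g (u, \<alpha>) b" unfolding g_def bb by simp
        qed
        also have "\<dots> \<le> (SUP a\<in>A. INF b\<in>BB. g a b)" using cSUP_upper[OF ain bddI] .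
        finally show ?thesis by simp
      qed
      thus "T \<le> (SUP a\<in>A. INF b\<in>BB. g a b) + e" .
    qed
  qed
  have J_ge: "T \<le> (SUP a\<in>A. g a b)" if "b \<in> BB" for b
  proof (rule field_le_epsilon)
    fix e :: real assume e: "0 < e"
    obtain v \<beta> where bb: "b = (v, \<beta>)" by (cases b)
    have v: "v \<in> V" and be: "\<beta> ` U \<subseteq> V" using that bb inB by auto
    obtain u where u: "u \<in> U" "L - e < (INF v\<in>V. f u v)" using apL e by blast
    obtain u' where u': "u' \<in> U" "(SUP u\<in>U. f u v) - e < f u' v" using apS[OF e v] by blast
    have ain: "(u, \<lambda>_. u') \<in> A" using inA u u' by auto
    have "(INF v\<in>V. f u v) \<le> f u (\<beta> u)" using cINF_lower[OF bddA1(2)[OF u(1)]] be u by auto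
    hence h1: "L - e \<le> f u (\<beta> u)" using u by linarith
    have h2: "Up - e \<le> f u' v" using u' supU[OF v] by linarith
    have "T - e = p * (L - e) + (1-p) * (Up - e)" using Teps by simp
    also have "\<dots> \<le> p * f u (\<beta> u) + (1-p) * f u' v" using comb h1 h2 by blast
    also have "\<dots> = g (u, \<lambda>_. u') b" unfolding g_def bb by simp
    also have "\<dots> \<le> (SUP a\<in>A. g a b)" using cSUP_upper[OF ain bddgA(2)[OF that]] .
    finally show "T \<le> (SUP a\<in>A. g a b) + e" by simp
  qed
  have bddJ: "bdd_below ((\<lambda>b. SUP a\<in>A. g a b) ` BB)" using J_ge by (auto intro!: bdd_belowI2)
  have S2: "(INF b\<in>BB. SUP a\<in>A. g a b) = T"
  proof (rule antisym)
    show "T \<le> (INF b\<in>BB. SUP a\<in>A. g a b)" using J_ge Bne by (simp add: cINF_greatest)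
    show "(INF b\<in>BB. SUP a\<in>A. g a b) \<le> T"
    proof (rule field_le_epsilon)
      fix e :: real assume e: "0 < e"
      obtain v where v: "v \<in> V" "(SUP u\<in>U. f u v) < Up + e" using apU e by blast
      define \<beta> where "\<beta> = (\<lambda>u. SOME v. v \<in> V \<and> f u v < (INF v\<in>V. f u v) + e)"
      have be: "\<beta> u \<in> V \<and> f u (\<beta> u) < (INF v\<in>V. f u v) + e" if "u \<in> U" for u
      proof -
        have "\<exists>v. v \<in> V \<and> f u v < (INF v\<in>V. f u v) + e" using apI[OF e that] by blast
        thus ?thesis unfolding \<beta>_def by (rule someI_ex)
      qed
      have bin: "(v, \<beta>) \<in> BB" using inB v be by auto
      have "(INF b\<in>BB. SUP a\<in>A. g a b) \<le> (SUP a\<in>A. g a (v, \<beta>))" using cINF_lower[OF bddJ bin] .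
      also have "\<dots> \<le> T + e"
      proof (rule cSUP_least[OF Ane])
        fix a assume a: "a \<in> A"
        obtain u \<alpha> where aa: "a = (u, \<alpha>)" by (cases a)
        have u: "u \<in> U" and al: "\<alpha> ` V \<subseteq> U" using a aa inA by auto
        have "f (\<alpha> v) v \<le> (SUP u\<in>U. f u v)" using cSUP_upper[OF _ bddB1(1)[OF v(1)]] al v by auto
        hence h1: "f (\<alpha> v) v \<le> Up + e" using v by linarith
        have h2: "f u (\<beta> u) \<le> L + e" using be[OF u] infL[OF u] by linarith
        have "g a (v, \<beta>) = p * f u (\<beta> u) + (1-p) * f (\<alpha> v) v" unfolding g_def aa by simp
        also have "\<dots> \<le> p * (L + e) + (1-p) * (Up + e)" using comb h1 h2 by blast
        finally show "g a (v, \<beta>) \<le> T + e" using Teps by simp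
      qed
      finally show "(INF b\<in>BB. SUP a\<in>A. g a b) \<le> T + e" .
    qed
  qed
  show ?thesis using S1 S2 pv unfolding A_def BB_def g_def by simp
qed

end
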